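(* Let $G$, $k\ge 3$, the choice strings $c_{i,j}$, the template string $t$, $L$ and $d$ be as in the binary construction in the context, and let $s\in\{0,1\}^L$ be a solution, i.e. $t$ and every choice string $c_{i,j}$ ($1\le i<j\le k$) have a substring of length $L$ at Hamming distance at most $d$ from $s$. Then every section of the encoding part of $s$ contains exactly one symbol $1$.
   Context: Let $G=(V,E)$ be an undirected simple graph with $V=\{v_1,\dots,v_n\}$ and edge set $E=\{e_1,\dots,e_m\}$, and let $k\ge 3$ be an integer; put $N=\binom{k}{2}$ and $b=nk-2k+2$. All strings are over $\{0,1\}$. For $1\le p\le n$ let $\mathrm{number}(p)=0^{p-1}10^{n-p}$. Let $\mathrm{front\_tag}=(1^{3nk}0)^{nk}$ (length $(3nk+1)nk$). Order the pairs $(i,j)$, $1\le i<j\le k$, lexicographically and let $i'$ be the position of $(i,j)$ in this order. For an edge $e$ joining $v_r,v_s$ with $r<s$ let $\mathrm{encode}(i,j,e)=(0^n)^{i-1}\,\mathrm{number}(r)\,(0^n)^{j-i-1}\,\mathrm{number}(s)\,(0^n)^{k-j}$, $\mathrm{back\_tag}(i')=0^{(i'-1)b}1^{b}0^{(N-i')b}$, and $\mathrm{block}(i,j,e)=\mathrm{front\_tag}\,\mathrm{encode}(i,j,e)\,\mathrm{back\_tag}(i')$. The choice string is $c_{i,j}=\mathrm{block}(i,j,e_1)\cdots\mathrm{block}(i,j,e_m)$. The template string is $t=\mathrm{front\_tag}\,1^{nk}\,0^{Nb}$. Set $L=(3nk+1)nk+nk+Nb$ and $d=nk-k$. For a string $s$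 of length $L$, its encoding part is the substring of its positions $(3nk+1)nk+1,\dots,(3nk+1)nk+nk$, divided into $k$ consecutive sections of length $n$. *)

theory Defs
  imports Main
begin

text \<open>Binary strings are modelled as bool lists; True stands for symbol 1, False for 0.
  The graph G has vertices v_1..v_n (indices 1..n) and its edge list e_1..e_m is given
  as a list of pairs (r,s) with 1 <= r < s <= n (no repetitions).\<close>

definition simple_graph_edges :: "nat \<Rightarrow> (nat \<times> nat) list \<Rightarrow> bool" where
  "simple_graph_edges n E \<longleftrightarrow> distinct E \<and> (\<forall>(r, s) \<in> set E. 1 \<le> r \<and> r < s \<and> s \<le> n)"

definition zeros :: "nat \<Rightarrow> bool list" where
  "zeros l = replicate l False"

definition ones :: "nat \<Rightarrow> bool list" where
  "ones l = replicate l True"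

definition number :: "nat \<Rightarrow> nat \<Rightarrow> bool list" where
  "number n p = zeros (p - 1) @ [True] @ zeros (n - p)"

definition front_tag :: "nat \<Rightarrow> nat \<Rightarrow> bool list" where
  "front_tag n k = concat (replicate (n * k) (ones (3 * n * k) @ [False]))"

definition Npairs :: "nat \<Rightarrow> nat" where
  "Npairs k = k choose 2"

definition bparam :: "nat \<Rightarrow> nat \<Rightarrow> nat" where
  "bparam n k = n * k - 2 * k + 2"

text \<open>Position of (i,j), 1 <= i < j <= k, in the lexicographic order of such pairs (1-based).\<close>
definition pair_pos :: "nat \<Rightarrow> nat \<Rightarrow> nat \<Rightarrow> nat" where
  "pair_pos k i j = length (takeWhile (\<lambda>p. p \<noteq> (i, j))
      [(a, c). a \<leftarrow> [1..<k+1], c \<leftarrow> [a+1..<k+1]]) + 1"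

definition encode :: "nat \<Rightarrow> nat \<Rightarrow> nat \<Rightarrow> nat \<Rightarrow> nat \<times> nat \<Rightarrow> bool list" where
  "encode n k i j e = (case e of (r, s) \<Rightarrow>
      concat (replicate (i - 1) (zeros n)) @ number n r @
      concat (replicate (j - i - 1) (zeros n)) @ number n s @
      concat (replicate (k - j) (zeros n)))"

definition back_tag :: "nat \<Rightarrow> nat \<Rightarrow> nat \<Rightarrow> bool list" where
  "back_tag n k i' = zeros ((i' - 1) * bparam n k) @ ones (bparam n k) @
      zeros ((Npairs k - i') * bparam n k)"

definition block :: "nat \<Rightarrow> nat \<Rightarrow> nat \<Rightarrow> nat \<Rightarrow> nat \<times> nat \<Rightarrow> bool list" where
  "block n k i j e = front_tag n k @ encode n k i j e @ back_tag n k (pair_pos k i j)"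

definition choice_string :: "nat \<Rightarrow> (nat \<times> nat) list \<Rightarrow> nat \<Rightarrow> nat \<Rightarrow> nat \<Rightarrow> bool list" where
  "choice_string n E k i j = concat (map (block n k i j) E)"

definition template :: "nat \<Rightarrow> nat \<Rightarrow> bool list" where
  "template n k = front_tag n k @ ones (n * k) @ zeros (Npairs k * bparam n k)"

definition Lparam :: "nat \<Rightarrow> nat \<Rightarrow> nat" where
  "Lparam n k = (3 * n * k + 1) * n * k + n * k + Npairs k * bparam n k"

definition dparam :: "nat \<Rightarrow> nat \<Rightarrow> nat" where
  "dparam n k = n * k - k"

definition hamming :: "bool list \<Rightarrow> bool list \<Rightarrow> nat" where
  "hamming x y = length (filter (\<lambda>(a, b). a \<noteq> b) (zip x y))"

definition close_substring :: "bool list \<Rightarrow> bool list \<Rightarrow> nat \<Rightarrow> bool" where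
  "close_substring c s d \<longleftrightarrow>
     (\<exists>p. p + length s \<le> length c \<and> hamming (take (length s) (drop p c)) s \<le> d)"

definition enc_section :: "nat \<Rightarrow> nat \<Rightarrow> bool list \<Rightarrow> nat \<Rightarrow> bool list" where
  "enc_section n k s q = take n (drop ((3 * n * k + 1) * n * k + (q - 1) * n) s)"

end

theory Submission
  imports Defs
begin

lemma concat_uniform_nth:
  assumes "\<forall>x\<in>set xs. length (f x) = L" "a < length xs" "z < L"
  shows "concat (map f xs) ! (a*L + z) = f (xs!a) ! z"
  using assms
proof (induction xs arbitrary: a)
  case Nil then show ?case by simp
next
  case (Cons x xs)
  show ?case
  proof (cases a)
    case 0 then show ?thesis using Cons.prems by (simp add: nth_append)
  next
    case (Suc a')
    have "concat (map f (x#xs)) ! (a*L+z) = concat (map f xs) ! (a'*L + z)"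
      using Cons.prems Suc by (simp add: nth_append)
    also have "\<dots> = f (xs!a') ! z" using Cons Suc by simp
    finally show ?thesis using Suc by simp
  qed
qed

lemma concat_uniform_length:
  assumes "\<forall>x\<in>set xs. length (f x) = L"
  shows "length (concat (map f xs)) = length xs * L"
  using assms by (induction xs) auto

lemma concat_replicate_nth:
  assumes "z < m * length xs"
  shows "concat (replicate m xs) ! z = xs ! (z mod length xs)"
  using assms
proof (induction m arbitrary: z)
  case 0 then show ?case by simp
next
  case (Suc m)
  show ?case
  proof (cases "z < length xs")
    case True then show ?thesis by (simp add: nth_append)
  next
    case False
    then have "concat (replicate (Suc m) xs) ! z = concat (replicate m xs) ! (z - length xs)"
      by (simp add: nth_append)
    also have "\<dots> = xs ! ((z - length xs) mod length xs)" using Suc False by simp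
    also have "(z - length xs) mod length xs = z mod length xs" using False
      by (simp add: mod_if)
    finally show ?thesis .
  qed
qed

lemma hamming_card:
  assumes "length x = length y"
  shows "hamming x y = card {i. i < length x \<and> x!i \<noteq> y!i}"
  unfolding hamming_def using assms
  by (simp add: length_filter_conv_card, intro arg_cong[where f=card] Collect_cong) auto

lemma mod_eq_gap:
  fixes x1 x2 P :: nat
  assumes "x1 < x2" "x1 mod P = x2 mod P" "0 < P"
  shows "x1 + P \<le> x2"
proof -
  have "P dvd (x2 - x1)" using assms by (metis less_or_eq_imp_le mod_eq_dvd_iff_nat)
  then obtain q where q: "x2 - x1 = P * q" by blast
  have "q \<noteq> 0"
  proof
    assume "q = 0" then show False using q assms by simp
  qed
  then have "P \<le> P * q" by simp
  with q assms show ?thesis by linarith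
qed

lemma AP_count:
  fixes u v P c :: nat
  assumes "0 < P"
  shows "card {x. u \<le> x \<and> x < v \<and> x mod P = c} \<le> (v - u) div P + 1"
proof -
  let ?S = "{x. u \<le> x \<and> x < v \<and> x mod P = c}"
  have inj: "inj_on (\<lambda>x. (x - u) div P) ?S"
  proof (rule inj_onI)
    fix x y assume x: "x \<in> ?S" and y: "y \<in> ?S" and e: "(x - u) div P = (y - u) div P"
    show "x = y"
    proof (rule ccontr)
      assume "x \<noteq> y"
      then consider "x < y" | "y < x" by linarith
      then show False
      proof cases
        case 1
        then have "x + P \<le> y" using x y assms mod_eq_gap[of x y P] by auto
        then have "(x - u) + P \<le> y - u" using x by auto
        then have "(x - u + P) div P \<le> (y - u) div P" using div_le_mono by blast
        then show False using e assms by (simp add: div_add_self2)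
      next
        case 2
        then have "y + P \<le> x" using x y assms mod_eq_gap[of y x P] by auto
        then have "(y - u) + P \<le> x - u" using y by auto
        then have "(y - u + P) div P \<le> (x - u) div P" using div_le_mono by blast
        then show False using e assms by (simp add: div_add_self2)
      qed
    qed
  qed
  have sub: "(\<lambda>x. (x - u) div P) ` ?S \<subseteq> {..(v - u) div P}"
    by (auto intro: div_le_mono)
  have "card ?S = card ((\<lambda>x. (x - u) div P) ` ?S)" using inj by (simp add: card_image)
  also have "\<dots> \<le> card {..(v - u) div P}" using sub by (intro card_mono) auto
  finally show ?thesis by simp
qed

lemma mult_step_le:
  fixes i K P :: nat
  assumes "i < K"
  shows "i*P + P \<le> K*P"
proof -
  have "Suc i * P \<le> K * P" using assms by (intro mult_le_mono1) simp
  then show ?thesis by simp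
qed

lemma modP: "(a::nat) < P \<Longrightarrow> (i*P + a) mod P = a" by simp

lemma misalign:
  fixes C T :: "nat \<Rightarrow> bool" and K M P F L Lr N b k r :: nat
  assumes hM: "M = 3*K" and hP: "P = M + 1" and hF: "F = P*K" and hL: "L = F + Lr"
    and hLr: "Lr = K + N*b" and hb: "b + 2*k = K + 2" and hk: "2*k \<le> K" "3 \<le> k" "3 \<le> N"
    and C1: "\<forall>z<F. C z = (z mod P \<noteq> M)" and C2: "\<forall>z<F. C (L+z) = (z mod P \<noteq> M)"
    and C3: "card {z. F \<le> z \<and> z < L \<and> C z} \<le> b + 2"
    and T1: "\<forall>x<F. T x = (x mod P \<noteq> M)"
    and r: "0 < r" "r < L"
  shows "2*K - 2*k < card {x. x < F \<and> T x \<noteq> C (r + x)}"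
proof -
  let ?Mis = "{x. x < F \<and> T x \<noteq> C (r + x)}"
  have finM: "finite ?Mis" by simp
  have P0: "0 < P" using hP by simp
  have K0: "0 < K" using hk by simp
  have MP: "M < P" using hP by simp
  have KPF: "K*P = F" using hF by (simp add: mult.commute)
  consider (B) "r < P" | (Cc) "\<not> r < P" "L < r + P" | (D) "P \<le> r" "r + P \<le> L" by linarith
  then show ?thesis
  proof cases
    case B
    let ?S1 = "(\<lambda>i. i*P + (M - r)) ` {..<K}"
    let ?S2 = "(\<lambda>j. j*P + M) ` {..<K-1}"
    have rM: "r \<le> M" using B hP by simp
    have S1: "?S1 \<subseteq> ?Mis"
    proof
      fix x assume "x \<in> ?S1"
      then obtain i where i: "i < K" and x: "x = i*P + (M - r)" by auto
      have st: "i*P + P \<le> K*P" using mult_step_le[OF i] .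
      have "M - r < P" using hP by simp
      moreover have "K*P = F" using hF by (simp add: mult.commute)
      ultimately have xF: "x < F" using x st by linarith
      have "x mod P = M - r" using x modP[of "M - r" P i] MP by simp
      then have Tx: "T x" using T1 xF r rM by auto
      have e: "r + x = i*P + M" using x rM by simp
      have "i*P + M < F" using st KPF MP by linarith
      moreover have "(i*P + M) mod P = M" using modP[OF MP] by simp
      ultimately have "\<not> C (r + x)" using C1 e by simp
      then show "x \<in> ?Mis" using xF Tx by simp
    qed
    have S2: "?S2 \<subseteq> ?Mis"
    proof
      fix x assume "x \<in> ?S2"
      then obtain j where j: "j < K - 1" and x: "x = j*P + M" by auto
      have st: "Suc j*P + P \<le> K*P" using mult_step_le[of "Suc j" K P] j by simp
      have sj: "Suc j * P = j*P + P" by simp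
      have xF: "x < F" using x st sj KPF MP by linarith
      have "x mod P = M" using x modP[OF MP] by simp
      then have Tx: "\<not> T x" using T1 xF by simp
      have e: "r + x = Suc j*P + (r - 1)" using x r hP by simp
      have "Suc j*P + (r - 1) < F" using st KPF B by linarith
      moreover have "(Suc j*P + (r - 1)) mod P = r - 1" using B modP[of "r - 1" P "Suc j"] by simp
      moreover have "r - 1 \<noteq> M" using B hP r by simp
      ultimately have "C (r + x)" using C1 e by metis
      then show "x \<in> ?Mis" using xF Tx by simp
    qed
    have disj: "?S1 \<inter> ?S2 = {}"
    proof -
      have "\<And>i j. i*P + (M - r) \<noteq> j*P + M"
      proof
        fix i j assume "i*P + (M - r) = j*P + M"
        then have "(i*P + (M - r)) mod P = (j*P + M) mod P" by simp
        then have "M - r = M" using modP[of "M - r" P i] modP[OF MP, of j] MP by simp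
        then show False using r rM by simp
      qed
      then show ?thesis by auto
    qed
    have c1: "card ?S1 = K"
      using P0 by (subst card_image) (auto simp: inj_on_def)
    have c2: "card ?S2 = K - 1"
      using P0 by (subst card_image) (auto simp: inj_on_def)
    have "card (?S1 \<union> ?S2) = K + (K - 1)" using disj c1 c2 by (simp add: card_Un_disjoint)
    moreover have "card (?S1 \<union> ?S2) \<le> card ?Mis" using S1 S2 by (intro card_mono) auto
    ultimately show ?thesis using K0 hk by linarith
  next
    case Cc
    define dl where "dl = L - r"
    have dl: "0 < dl" "dl < P" "r + dl = L" using Cc r dl_def by auto
    have dlM: "dl \<le> M" using dl hP by simp
    let ?S1 = "(\<lambda>i. i*P + M + dl) ` {..<K-1}"
    let ?S2 = "(\<lambda>j. j*P + M) ` {..<K}"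
    have S1: "?S1 \<subseteq> ?Mis"
    proof
      fix x assume "x \<in> ?S1"
      then obtain i where i: "i < K - 1" and x: "x = i*P + M + dl" by auto
      have st: "Suc i*P + P \<le> K*P" using mult_step_le[of "Suc i" K P] i by simp
      have x2: "x = Suc i * P + (dl - 1)" using x dl hP by simp
      have xF: "x < F" using x2 st KPF dl by linarith
      have "x mod P = dl - 1" using x2 dl modP[of "dl - 1" P "Suc i"] by simp
      moreover have "dl - 1 \<noteq> M" using dl hP by simp
      ultimately have Tx: "T x" using T1 xF by simp
      have e: "r + x = L + (i*P + M)" using x dl by simp
      have "Suc i * P = i*P + P" by simp
      then have "i*P + M < F" using st KPF MP by linarith
      moreover have "(i*P + M) mod P = M" using modP[OF MP] by simp
      ultimately have "\<not> C (r + x)" using C2 e by simp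
      then show "x \<in> ?Mis" using xF Tx by simp
    qed
    have S2: "?S2 \<subseteq> ?Mis"
    proof
      fix x assume "x \<in> ?S2"
      then obtain j where j: "j < K" and x: "x = j*P + M" by auto
      have st: "j*P + P \<le> K*P" using mult_step_le[OF j] .
      have xF: "x < F" using x st KPF MP by linarith
      have "x mod P = M" using x modP[OF MP] by simp
      then have Tx: "\<not> T x" using T1 xF by simp
      have e: "r + x = L + (j*P + (M - dl))" using x dl dlM by simp
      have "j*P + (M - dl) < F" using st KPF MP by linarith
      moreover have "(j*P + (M - dl)) mod P = M - dl" using modP[of "M - dl" P j] MP by simp
      moreover have "M - dl \<noteq> M" using dl dlM by simp
      ultimately have "C (r + x)" using C2 e by metis
      then show "x \<in> ?Mis" using xF Tx by simp
    qed
    have disj: "?S1 \<inter> ?S2 = {}"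
    proof -
      have "\<And>i j. i*P + M + dl \<noteq> j*P + M"
      proof
        fix i j assume A: "i*P + M + dl = j*P + M"
        have "Suc i * P + (dl - 1) = i*P + M + dl" using dl hP by simp
        then have "Suc i * P + (dl - 1) = j*P + M" using A by linarith
        then have "(Suc i*P + (dl - 1)) mod P = (j*P + M) mod P" by (rule arg_cong)
        then have "dl - 1 = M" using modP[of "dl - 1" P "Suc i"] modP[OF MP, of j] dl by simp
        then show False using dl hP by simp
      qed
      then show ?thesis by auto
    qed
    have c1: "card ?S1 = K - 1"
      using P0 by (subst card_image) (auto simp: inj_on_def)
    have c2: "card ?S2 = K"
      using P0 by (subst card_image) (auto simp: inj_on_def)
    have "card (?S1 \<union> ?S2) = (K - 1) + K" using disj c1 c2 by (simp add: card_Un_disjoint)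
    moreover have "card (?S1 \<union> ?S2) \<le> card ?Mis" using S1 S2 by (intro card_mono) auto
    ultimately show ?thesis using K0 hk by linarith
  next
    case D
    define u where "u = F - r"
    define v where "v = min F (L - r)"
    let ?J = "{x. u \<le> x \<and> x < v}"
    let ?A = "{x. u \<le> x \<and> x < v \<and> C (r + x)}"
    let ?B = "{x. u \<le> x \<and> x < v \<and> x mod P = M}"
    have cover: "?J \<subseteq> ?Mis \<union> ?A \<union> ?B"
    proof
      fix x assume x: "x \<in> ?J"
      then have xF: "x < F" by (simp add: v_def)
      show "x \<in> ?Mis \<union> ?A \<union> ?B" using x xF T1 by auto
    qed
    have "?J = {u..<v}" by auto
    then have cJ: "card ?J = v - u" by simp
    have "card ?J \<le> card (?Mis \<union> ?A \<union> ?B)" using cover by (intro card_mono) auto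
    also have "\<dots> \<le> card ?Mis + card ?A + card ?B" by (meson card_Un_le add_le_mono order_trans le_refl)
    finally have main: "v - u \<le> card ?Mis + card ?A + card ?B" using cJ by simp
    have cA: "card ?A \<le> b + 2"
    proof -
      have "(\<lambda>x. r + x) ` ?A \<subseteq> {z. F \<le> z \<and> z < L \<and> C z}"
        by (auto simp: u_def v_def)
      then have "card ((\<lambda>x. r + x) ` ?A) \<le> card {z. F \<le> z \<and> z < L \<and> C z}"
        by (intro card_mono) auto
      moreover have "card ((\<lambda>x. r + x) ` ?A) = card ?A" by (simp add: card_image)
      ultimately show ?thesis using C3 by simp
    qed
    have cB: "card ?B \<le> (v - u) div P + 1" using AP_count[OF P0] .
    have Nb: "3*b \<le> N*b" using hk by (intro mult_le_mono1) simp
    have FP: "P \<le> F" using hF K0 by simp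
    have l: "P \<le> v - u \<or> v - u = Lr" using D hL FP by (auto simp: u_def v_def)
    then show ?thesis
    proof
      assume l: "P \<le> v - u"
      have q1: "1 \<le> (v - u) div P" using div_le_mono[OF l, of P] P0 by simp
      have "(v - u) div P * P \<le> v - u" by (simp add: div_times_less_eq_dividend)
      moreover have "(v - u) div P * P = (v - u) div P * M + (v - u) div P" using hP by simp
      moreover have "M \<le> (v - u) div P * M" using q1 by simp
      ultimately have "M + (v - u) div P \<le> v - u" by linarith
      then show ?thesis using main cA cB hM hb hk by linarith
    next
      assume l: "v - u = Lr"
      show ?thesis
      proof (cases "Lr < P")
        case True
        then have "(v - u) div P = 0" using l by simp
        then show ?thesis using main cA cB hLr hb hk Nb l by linarith
      next
        case False
        then have "P \<le> v - u" using l by simp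
        then have q1: "1 \<le> (v - u) div P" using div_le_mono[of P "v - u" P] P0 by simp
        have "(v - u) div P * P \<le> v - u" by (simp add: div_times_less_eq_dividend)
        moreover have "(v - u) div P * P = (v - u) div P * M + (v - u) div P" using hP by simp
        moreover have "M \<le> (v - u) div P * M" using q1 by simp
        ultimately have "M + (v - u) div P \<le> v - u" by linarith
        then show ?thesis using main cA cB hM hb hk by linarith
      qed
    qed
  qed
qed

lemma front_tag_length: "length (front_tag n k) = (3*n*k+1)*n*k"
  unfolding front_tag_def ones_def by (simp add: length_concat sum_list_replicate algebra_simps)

lemma front_tag_nth:
  assumes "z < (3*n*k+1)*n*k"
  shows "front_tag n k ! z = (z mod (3*n*k+1) \<noteq> 3*n*k)"
proof -
  have l: "length (ones (3*n*k) @ [False]) = 3*n*k+1" by (simp add: ones_def)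
  have eq: "(3*n*k+1)*n*k = (n*k) * (3*n*k+1)" by (simp add: algebra_simps)
  have "z < (n*k) * length (ones (3*n*k) @ [False])" using assms l eq by simp
  then have "front_tag n k ! z = (ones (3*n*k) @ [False]) ! (z mod (3*n*k+1))"
    unfolding front_tag_def using concat_replicate_nth l by metis
  moreover have m: "z mod (3*n*k+1) < 3*n*k+1" by (rule mod_less_divisor) simp
  then consider "z mod (3*n*k+1) < 3*n*k" | "z mod (3*n*k+1) = 3*n*k" by linarith
  ultimately show ?thesis by cases (auto simp: nth_append ones_def)
qed

lemma zeros_concat: "concat (replicate m (zeros n)) = zeros (m*n)"
  by (induction m) (auto simp: zeros_def replicate_add)

lemma zeros_append: "zeros a @ zeros b = zeros (a + b)"
  by (simp add: zeros_def replicate_add)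

lemma two_ones_nth:
  assumes "q < a + g + h + 2"
  shows "(zeros a @ [True] @ zeros g @ [True] @ zeros h) ! q = (q = a \<or> q = a + 1 + g)"
  using assms by (auto simp: nth_append nth_Cons' zeros_def)

lemma encode_eq:
  assumes "1 \<le> i" "i < j" "j \<le> k" "1 \<le> r" "r \<le> n" "1 \<le> s" "s \<le> n"
  shows "encode n k i j (r, s) = zeros ((i-1)*n + (r-1)) @ [True] @
           zeros ((n - r) + (j-i-1)*n + (s-1)) @ [True] @ zeros ((n - s) + (k-j)*n)"
proof -
  have "encode n k i j (r, s) = zeros ((i-1)*n) @ (zeros (r-1) @ [True] @ zeros (n-r)) @
      zeros ((j-i-1)*n) @ (zeros (s-1) @ [True] @ zeros (n-s)) @ zeros ((k-j)*n)"
    unfolding encode_def number_def by (simp add: zeros_concat)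
  also have "\<dots> = zeros ((i-1)*n + (r-1)) @ [True] @
           zeros ((n - r) + (j-i-1)*n + (s-1)) @ [True] @ zeros ((n - s) + (k-j)*n)"
    by (simp add: zeros_append[symmetric])
  finally show ?thesis .
qed

lemma encode_props:
  assumes "1 \<le> i" "i < j" "j \<le> k" "1 \<le> r" "r \<le> n" "1 \<le> s" "s \<le> n"
  shows "length (encode n k i j (r, s)) = n*k"
    and "q < n*k \<Longrightarrow> encode n k i j (r, s) ! q = (q = (i-1)*n + (r-1) \<or> q = (j-1)*n + (s-1))"
proof -
  have sum: "(i-1)*n + (r-1) + ((n - r) + (j-i-1)*n + (s-1)) + ((n - s) + (k-j)*n) + 2 = n*k"
  proof -
    have "(i-1) + 1 + (j-i-1) + 1 + (k-j) = k" using assms by simp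
    then have "((i-1) + 1 + (j-i-1) + 1 + (k-j))*n = k*n" by simp
    then have "(i-1)*n + n + (j-i-1)*n + n + (k-j)*n = k*n" by (simp add: algebra_simps)
    then show ?thesis using assms by (simp add: mult.commute)
  qed
  show "length (encode n k i j (r, s)) = n*k"
    using sum by (simp add: encode_eq[OF assms] zeros_def)
  have e2: "(i-1)*n + (r-1) + 1 + ((n - r) + (j-i-1)*n + (s-1)) = (j-1)*n + (s-1)"
  proof -
    have "(i-1) + 1 + (j-i-1) = j - 1" using assms by simp
    then have "((i-1) + 1 + (j-i-1))*n = (j-1)*n" by simp
    then have "(i-1)*n + n + (j-i-1)*n = (j-1)*n" by (simp add: algebra_simps)
    then show ?thesis using assms by simp
  qed
  assume q: "q < n*k"
  have X: "encode n k i j (r, s) ! q = (q = (i-1)*n + (r-1) \<or> q = (i-1)*n + (r-1) + 1 + ((n - r) + (j-i-1)*n + (s-1)))"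
    unfolding encode_eq[OF assms] by (rule two_ones_nth) (use q sum in linarith)
  show "encode n k i j (r, s) ! q = (q = (i-1)*n + (r-1) \<or> q = (j-1)*n + (s-1))"
    using X[unfolded e2] .
qed

lemma back_tag_props:
  assumes "1 \<le> ip" "ip \<le> Npairs k"
  shows "length (back_tag n k ip) = Npairs k * bparam n k"
    and "q < Npairs k * bparam n k \<Longrightarrow> back_tag n k ip ! q = ((ip-1)*bparam n k \<le> q \<and> q < ip * bparam n k)"
proof -
  have "(ip - 1) * bparam n k + bparam n k + (Npairs k - ip) * bparam n k = ((ip-1) + 1 + (Npairs k - ip)) * bparam n k"
    by (simp add: algebra_simps)
  also have "(ip-1) + 1 + (Npairs k - ip) = Npairs k" using assms by simp
  finally have l: "(ip - 1) * bparam n k + bparam n k + (Npairs k - ip) * bparam n k = Npairs k * bparam n k" .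
  show "length (back_tag n k ip) = Npairs k * bparam n k"
    unfolding back_tag_def zeros_def ones_def using l by simp
  have ib: "ip * bparam n k = (ip - 1) * bparam n k + bparam n k"
  proof -
    have "ip = (ip - 1) + 1" using assms by simp
    then have "ip * bparam n k = ((ip - 1) + 1) * bparam n k" by metis
    then show ?thesis by (simp add: algebra_simps)
  qed
  assume q: "q < Npairs k * bparam n k"
  show "back_tag n k ip ! q = ((ip-1)*bparam n k \<le> q \<and> q < ip * bparam n k)"
    unfolding back_tag_def zeros_def ones_def using ib q l by (auto simp: nth_append)
qed

lemma sum_kminus: "(\<Sum>a\<in>{1..k}. k - a) = k choose 2"
proof (induction k)
  case 0 then show ?case by simp
next
  case (Suc k)
  have "(\<Sum>a\<in>{1..Suc k}. Suc k - a) = (\<Sum>a\<in>{1..k}. Suc k - a)"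
    by simp
  also have "\<dots> = (\<Sum>a\<in>{1..k}. (k - a) + 1)"
    by (intro sum.cong) auto
  also have "\<dots> = (\<Sum>a\<in>{1..k}. k - a) + (\<Sum>a\<in>{1..k}. (1::nat))" by (rule sum.distrib)
  also have "(\<Sum>a\<in>{1..k}. (1::nat)) = k" by simp
  finally have "(\<Sum>a\<in>{1..Suc k}. Suc k - a) = (k choose 2) + k" using Suc.IH by simp
  moreover have "Suc k choose 2 = (k choose 2) + k"
    using binomial_Suc_Suc[of k 1] by (simp add: numeral_2_eq_2)
  ultimately show ?case by simp
qed

lemma pairs_length: "length [(a, c). a \<leftarrow> [1..<k+1], c \<leftarrow> [a+1..<k+1]] = k choose 2"
proof -
  have "length [(a, c). a \<leftarrow> [1..<k+1], c \<leftarrow> [a+1..<k+1]] = (\<Sum>a\<leftarrow>[1..<k+1]. k - a)"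
    by (simp add: length_concat comp_def del: upt_Suc)
  also have "\<dots> = (\<Sum>a\<in>{1..<k+1}. k - a)" by (simp only: interv_sum_list_conv_sum_set_nat set_upt)
  also have "{1..<k+1} = {1..k}" by auto
  finally show ?thesis using sum_kminus by simp
qed

lemma length_takeWhile_lt: "x \<in> set xs \<Longrightarrow> \<not> P x \<Longrightarrow> length (takeWhile P xs) < length xs"
  by (induction xs) auto

lemma pair_pos_bounds:
  assumes "1 \<le> i" "i < j" "j \<le> k"
  shows "1 \<le> pair_pos k i j" "pair_pos k i j \<le> Npairs k"
proof -
  show "1 \<le> pair_pos k i j" unfolding pair_pos_def by simp
  have mem: "(i, j) \<in> set [(a, c). a \<leftarrow> [1..<k+1], c \<leftarrow> [a+1..<k+1]]"
    using assms by (simp del: upt_Suc) (intro bexI[of _ i]; auto)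
  have "length (takeWhile (\<lambda>p. p \<noteq> (i, j)) [(a, c). a \<leftarrow> [1..<k+1], c \<leftarrow> [a+1..<k+1]])
        < length [(a, c). a \<leftarrow> [1..<k+1], c \<leftarrow> [a+1..<k+1]]"
    using mem by (rule length_takeWhile_lt) simp
  then show "pair_pos k i j \<le> Npairs k" unfolding pair_pos_def Npairs_def pairs_length by simp
qed

lemma pair_pos_12: "3 \<le> k \<Longrightarrow> pair_pos k 1 2 = 1"
  unfolding pair_pos_def by (simp add: upt_conv_Cons)

lemma pair_pos_13: "3 \<le> k \<Longrightarrow> pair_pos k 1 3 = 2"
  unfolding pair_pos_def by (simp add: upt_conv_Cons del: upt_Suc)

lemma block_props:
  assumes "1 \<le> i" "i < j" "j \<le> k" "1 \<le> r" "r \<le> n" "1 \<le> s" "s \<le> n"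
  shows "length (block n k i j (r,s)) = Lparam n k"
    and "z < Lparam n k \<Longrightarrow> block n k i j (r,s) ! z =
      (if z < (3*n*k+1)*n*k then z mod (3*n*k+1) \<noteq> 3*n*k
       else if z < (3*n*k+1)*n*k + n*k then
         (z - (3*n*k+1)*n*k = (i-1)*n + (r-1) \<or> z - (3*n*k+1)*n*k = (j-1)*n + (s-1))
       else ((pair_pos k i j - 1)*bparam n k \<le> z - (3*n*k+1)*n*k - n*k \<and>
             z - (3*n*k+1)*n*k - n*k < pair_pos k i j * bparam n k))"
proof -
  have pb: "1 \<le> pair_pos k i j" "pair_pos k i j \<le> Npairs k" using pair_pos_bounds assms by auto
  note bt = back_tag_props[OF pb, where n=n]
  note en = encode_props[OF assms]
  show "length (block n k i j (r,s)) = Lparam n k"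
    unfolding block_def Lparam_def using front_tag_length bt(1) en(1) by simp
  assume z: "z < Lparam n k"
  have lf: "length (front_tag n k) = (3*n*k+1)*n*k" by (rule front_tag_length)
  show "block n k i j (r,s) ! z =
      (if z < (3*n*k+1)*n*k then z mod (3*n*k+1) \<noteq> 3*n*k
       else if z < (3*n*k+1)*n*k + n*k then
         (z - (3*n*k+1)*n*k = (i-1)*n + (r-1) \<or> z - (3*n*k+1)*n*k = (j-1)*n + (s-1))
       else ((pair_pos k i j - 1)*bparam n k \<le> z - (3*n*k+1)*n*k - n*k \<and>
             z - (3*n*k+1)*n*k - n*k < pair_pos k i j * bparam n k))"
  proof (cases "z < (3*n*k+1)*n*k")
    case True
    then show ?thesis unfolding block_def using lf front_tag_nth[OF True] by (simp add: nth_append)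
  next
    case F1: False
    show ?thesis
    proof (cases "z < (3*n*k+1)*n*k + n*k")
      case True
      then have q: "z - (3*n*k+1)*n*k < n*k" using F1 by linarith
      show ?thesis unfolding block_def using lf en(1) en(2)[OF q] q F1 True by (simp add: nth_append)
    next
      case False
      have q: "z - (3*n*k+1)*n*k - n*k < Npairs k * bparam n k" using z False unfolding Lparam_def by linarith
      have q2: "\<not> z - (3*n*k+1)*n*k < n*k" using False by linarith
      show ?thesis unfolding block_def using lf en(1) bt(2)[OF q] q2 F1 False by (simp add: nth_append)
    qed
  qed
qed

lemma template_props:
  shows "length (template n k) = Lparam n k"
    and "z < Lparam n k \<Longrightarrow> template n k ! z =
      (if z < (3*n*k+1)*n*k then z mod (3*n*k+1) \<noteq> 3*n*k else z < (3*n*k+1)*n*k + n*k)"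
proof -
  have lf: "length (front_tag n k) = (3*n*k+1)*n*k" by (rule front_tag_length)
  show "length (template n k) = Lparam n k"
    unfolding template_def Lparam_def using lf by (simp add: ones_def zeros_def)
  assume z: "z < Lparam n k"
  show "template n k ! z =
      (if z < (3*n*k+1)*n*k then z mod (3*n*k+1) \<noteq> 3*n*k else z < (3*n*k+1)*n*k + n*k)"
  proof (cases "z < (3*n*k+1)*n*k")
    case True
    then show ?thesis unfolding template_def using lf front_tag_nth[OF True] by (simp add: nth_append)
  next
    case False
    have e: "(z - (3*n*k+1)*n*k < n*k) = (z < (3*n*k+1)*n*k + n*k)" using False by linarith
    show ?thesis unfolding template_def using lf z False e
      by (simp add: nth_append ones_def zeros_def Lparam_def)
  qed
qed

lemma Npairs_ge3: "3 \<le> k \<Longrightarrow> 3 \<le> Npairs k"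
proof -
  assume k: "3 \<le> k"
  have "3 * 2 \<le> k * (k - 1)" using k by (intro mult_le_mono) auto
  then have "3 \<le> k * (k - 1) div 2" by linarith
  then show ?thesis unfolding Npairs_def by (simp add: choose_two)
qed

lemma edge_bounds:
  assumes "simple_graph_edges n E" "(r, s) \<in> set E"
  shows "1 \<le> r" "r < s" "s \<le> n"
  using assms unfolding simple_graph_edges_def by auto

lemma aligned:
  assumes E: "simple_graph_edges n E" and k3: "3 \<le> k" and n2: "2 \<le> n"
    and ls: "length s = Lparam n k"
    and tmpl: "card {x. x < Lparam n k \<and> template n k ! x \<noteq> s ! x} \<le> dparam n k"
    and ij: "1 \<le> i" "i < j" "j \<le> k"
    and cs: "close_substring (choice_string n E k i j) s (dparam n k)"
  shows "\<exists>r s'. (r, s') \<in> set E \<and>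
           card {x. x < Lparam n k \<and> block n k i j (r, s') ! x \<noteq> s ! x} \<le> dparam n k"
proof -
  define L where "L = Lparam n k"
  define c where "c = choice_string n E k i j"
  have blen: "\<forall>e\<in>set E. length (block n k i j e) = L"
  proof
    fix e assume e: "e \<in> set E"
    obtain r s' where rs: "e = (r, s')" by (cases e)
    have "1 \<le> r" "r < s'" "s' \<le> n" using edge_bounds[OF E] e rs by auto
    then show "length (block n k i j e) = L" unfolding L_def rs using block_props(1) ij by simp
  qed
  have clen: "length c = length E * L" unfolding c_def choice_string_def
    using concat_uniform_length[OF blen] .
  have Lpos: "0 < L" unfolding L_def Lparam_def using Npairs_ge3[OF k3] by (simp add: bparam_def)
  obtain p where p: "p + L \<le> length c" and hp: "hamming (take L (drop p c)) s \<le> dparam n k"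
    using cs unfolding close_substring_def c_def L_def ls by auto
  have hc: "card {x. x < L \<and> c ! (p + x) \<noteq> s ! x} \<le> dparam n k"
  proof -
    have "hamming (take L (drop p c)) s = card {x. x < length (take L (drop p c)) \<and> take L (drop p c) ! x \<noteq> s ! x}"
      using p ls L_def by (intro hamming_card) simp
    also have "\<dots> = card {x. x < L \<and> c ! (p + x) \<noteq> s ! x}"
      using p by (intro arg_cong[where f=card] Collect_cong) auto
    finally show ?thesis using hp by simp
  qed
  define a where "a = p div L"
  define r where "r = p mod L"
  have pa: "p = a*L + r" unfolding a_def r_def by simp
  have rL: "r < L" unfolding r_def using Lpos by simp
  have cnth: "c ! (q*L + z) = block n k i j (E!q) ! z" if "q < length E" "z < L" for q z
    unfolding c_def choice_string_def using concat_uniform_nth[OF blen that] .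
  have ebd: "1 \<le> fst (E!q) \<and> fst (E!q) < snd (E!q) \<and> snd (E!q) \<le> n" if "q < length E" for q
  proof -
    have "E!q \<in> set E" using that by simp
    then show ?thesis using edge_bounds[OF E, of "fst (E!q)" "snd (E!q)"] by simp
  qed
  show ?thesis
  proof (cases "r = 0")
    case True
    have "(a+1)*L \<le> length E * L" using p clen pa True by simp
    then have "a + 1 \<le> length E" using mult_le_cancel2[of "a+1" L "length E"] Lpos by blast
    then have aE: "a < length E" by simp
    obtain r1 s1 where e: "E!a = (r1, s1)" by (cases "E!a")
    have mem: "(r1, s1) \<in> set E" using aE e nth_mem by metis
    have eq: "c ! (p + x) = block n k i j (r1, s1) ! x" if "x < L" for x
      using cnth[OF aE that] pa True e by simp
    have "{x. x < L \<and> c ! (p + x) \<noteq> s ! x} = {x. x < L \<and> block n k i j (r1, s1) ! x \<noteq> s ! x}"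
      using eq by auto
    then show ?thesis using hc mem unfolding L_def by auto
  next
    case False
    have "a*L + L < length E * L" using p clen pa False by simp
    then have "(a+1)*L < length E * L" by simp
    then have a1: "a + 1 < length E" using mult_less_cancel2[of "a+1" L "length E"] by blast
    then have aE: "a < length E" by simp
    define F where "F = (3*n*k+1)*n*k"
    define K where "K = n*k"
    define b where "b = bparam n k"
    define N where "N = Npairs k"
    define C where "C y = c ! (a*L + y)" for y
    have FL: "F < L" unfolding F_def L_def Lparam_def using Npairs_ge3[OF k3] by (simp add: bparam_def)
    have C1: "\<forall>z<F. C z = (z mod (3*n*k+1) \<noteq> 3*n*k)"
    proof (intro allI impI)
      fix z assume z: "z < F"
      then have zL: "z < L" using FL by simp
      have "C z = block n k i j (E!a) ! z" unfolding C_def using cnth[OF aE zL] .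
      also have "\<dots> = (z mod (3*n*k+1) \<noteq> 3*n*k)"
        using block_props(2)[of i j k "fst (E!a)" n "snd (E!a)" z] ij ebd[OF aE] zL z
        unfolding L_def F_def by simp
      finally show "C z = (z mod (3*n*k+1) \<noteq> 3*n*k)" .
    qed
    have C2: "\<forall>z<F. C (L + z) = (z mod (3*n*k+1) \<noteq> 3*n*k)"
    proof (intro allI impI)
      fix z assume z: "z < F"
      then have zL: "z < L" using FL by simp
      have "C (L + z) = c ! ((a+1)*L + z)" unfolding C_def by (simp add: algebra_simps)
      also have "\<dots> = block n k i j (E!(a+1)) ! z" using cnth[OF a1 zL] .
      also have "\<dots> = (z mod (3*n*k+1) \<noteq> 3*n*k)"
        using block_props(2)[of i j k "fst (E!(a+1))" n "snd (E!(a+1))" z] ij ebd[OF a1] zL z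
        unfolding L_def F_def by simp
      finally show "C (L + z) = (z mod (3*n*k+1) \<noteq> 3*n*k)" .
    qed
    define ip where "ip = pair_pos k i j"
    have ip1: "1 \<le> ip" unfolding ip_def using pair_pos_bounds ij by auto
    define e1 where "e1 = (i-1)*n + (fst (E!a) - 1)"
    define e2 where "e2 = (j-1)*n + (snd (E!a) - 1)"
    have C3sub: "{z. F \<le> z \<and> z < L \<and> C z} \<subseteq> {F + e1, F + e2} \<union> {F + K + (ip-1)*b ..< F + K + ip*b}"
    proof
      fix z assume z: "z \<in> {z. F \<le> z \<and> z < L \<and> C z}"
      then have zL: "z < L" and zF: "F \<le> z" and Cz: "C z" by auto
      have "C z = block n k i j (E!a) ! z" unfolding C_def using cnth[OF aE zL] .
      also have "\<dots> = (if z < F + K then (z - F = e1 \<or> z - F = e2)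
          else ((ip - 1)*b \<le> z - F - K \<and> z - F - K < ip * b))"
        using block_props(2)[of i j k "fst (E!a)" n "snd (E!a)" z] ij ebd[OF aE] zL zF
        unfolding L_def F_def K_def e1_def e2_def ip_def b_def by simp
      finally show "z \<in> {F + e1, F + e2} \<union> {F + K + (ip-1)*b ..< F + K + ip*b}"
        using Cz zF by (auto split: if_splits)
    qed
    have ipb: "ip * b = (ip - 1) * b + b"
    proof -
      have "ip = (ip - 1) + 1" using ip1 by simp
      then have "ip * b = ((ip - 1) + 1) * b" by metis
      then show ?thesis by (simp add: algebra_simps)
    qed
    have C3: "card {z. F \<le> z \<and> z < L \<and> C z} \<le> b + 2"
    proof -
      have "card {z. F \<le> z \<and> z < L \<and> C z} \<le> card ({F + e1, F + e2} \<union> {F + K + (ip-1)*b ..< F + K + ip*b})"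
        using C3sub by (intro card_mono) auto
      also have "\<dots> \<le> card {F + e1, F + e2} + card {F + K + (ip-1)*b ..< F + K + ip*b}"
        by (rule card_Un_le)
      also have "card {F + e1, F + e2} \<le> 2" by (simp add: card_insert_if)
      also have "card {F + K + (ip-1)*b ..< F + K + ip*b} = b" using ipb by simp
      finally show ?thesis by simp
    qed
    have T1: "\<forall>x<F. template n k ! x = (x mod (3*n*k+1) \<noteq> 3*n*k)"
    proof (intro allI impI)
      fix x assume x: "x < F"
      then have "x < Lparam n k" using FL L_def by simp
      then show "template n k ! x = (x mod (3*n*k+1) \<noteq> 3*n*k)"
        using template_props(2) x unfolding F_def by simp
    qed
    have b2k: "b + 2*k = K + 2"
    proof -
      have "2*k \<le> n*k" using n2 by (intro mult_le_mono1)
      then show ?thesis unfolding b_def K_def bparam_def by simp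
    qed
    have kK: "2*k \<le> K" unfolding K_def using n2 by (intro mult_le_mono1)
    have mis: "2*K - 2*k < card {x. x < F \<and> template n k ! x \<noteq> C (r + x)}"
    proof (rule misalign[where M="3*n*k" and P="3*n*k+1" and Lr="K + N*b" and N=N])
      show "3*n*k = 3*K" unfolding K_def by simp
      show "F = (3*n*k+1)*K" unfolding F_def K_def by (simp add: algebra_simps)
      show "L = F + (K + N*b)" unfolding L_def F_def K_def N_def b_def Lparam_def by simp
    qed (use b2k kK k3 Npairs_ge3[OF k3] C1 C2 C3 T1 False rL in \<open>auto simp: N_def\<close>)
    have sub: "{x. x < F \<and> template n k ! x \<noteq> C (r + x)} \<subseteq>
        {x. x < Lparam n k \<and> template n k ! x \<noteq> s ! x} \<union> {x. x < L \<and> c ! (p + x) \<noteq> s ! x}"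
      using FL pa unfolding C_def L_def by (auto simp: algebra_simps)
    have "card {x. x < F \<and> template n k ! x \<noteq> C (r + x)} \<le>
        card ({x. x < Lparam n k \<and> template n k ! x \<noteq> s ! x} \<union> {x. x < L \<and> c ! (p + x) \<noteq> s ! x})"
      using sub by (intro card_mono) auto
    also have "\<dots> \<le> card {x. x < Lparam n k \<and> template n k ! x \<noteq> s ! x} + card {x. x < L \<and> c ! (p + x) \<noteq> s ! x}"
      by (rule card_Un_le)
    finally have "card {x. x < F \<and> template n k ! x \<noteq> C (r + x)} \<le> 2 * dparam n k"
      using tmpl hc by simp
    moreover have "2 * dparam n k = 2*K - 2*k" unfolding dparam_def K_def by simp
    ultimately show ?thesis using mis by simp
  qed
qed

lemma split_count:
  fixes f g1 g2 :: "nat \<Rightarrow> bool" and s :: "bool list"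
  assumes "\<forall>q<K. f (F+q) = g1 q" "\<forall>q<Q. f (F+K+q) = g2 q" "F + K + Q \<le> L"
  shows "card {q. q<K \<and> g1 q \<noteq> s!(F+q)} + card {q. q<Q \<and> g2 q \<noteq> s!(F+K+q)}
         \<le> card {x. x<L \<and> f x \<noteq> s!x}"
proof -
  let ?A = "{q. q<K \<and> g1 q \<noteq> s!(F+q)}"
  let ?B = "{q. q<Q \<and> g2 q \<noteq> s!(F+K+q)}"
  have "card ((\<lambda>q. F+q) ` ?A \<union> (\<lambda>q. F+K+q) ` ?B) = card ((\<lambda>q. F+q) ` ?A) + card ((\<lambda>q. F+K+q) ` ?B)"
    by (rule card_Un_disjoint) auto
  also have "\<dots> = card ?A + card ?B" by (simp add: card_image)
  finally have e: "card ((\<lambda>q. F+q) ` ?A \<union> (\<lambda>q. F+K+q) ` ?B) = card ?A + card ?B" .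
  have "(\<lambda>q. F+q) ` ?A \<union> (\<lambda>q. F+K+q) ` ?B \<subseteq> {x. x<L \<and> f x \<noteq> s!x}"
    using assms by auto
  then have "card ((\<lambda>q. F+q) ` ?A \<union> (\<lambda>q. F+K+q) ` ?B) \<le> card {x. x<L \<and> f x \<noteq> s!x}"
    by (intro card_mono) auto
  then show ?thesis using e by simp
qed


lemma core:
  fixes X Y Bs :: "nat set" and e1 e2 K k b d Q :: nat
  assumes XK: "X \<subseteq> {..<K}" and YQ: "Y \<subseteq> {..<Q}" and BQ: "Bs \<subseteq> {..<Q}" and cB: "card Bs = b"
    and e: "e1 < K" "e2 < K"
    and dk: "d + k = K" and bk: "b + 2*k = K + 2"
    and T: "card ({..<K} - X) + card Y \<le> d"
    and B: "card {q. q<K \<and> (q = e1 \<or> q = e2) \<noteq> (q \<in> X)} + card {q. q<Q \<and> (q\<in>Bs) \<noteq> (q\<in>Y)} \<le> d"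
  shows "Y \<subseteq> Bs" and "Y = {} \<Longrightarrow> e1 \<in> X \<and> e2 \<in> X \<and> card X \<le> k"
proof -
  have fX: "finite X" using XK finite_subset by blast
  have fY: "finite Y" using YQ finite_subset by blast
  have fB: "finite Bs" using BQ finite_subset by blast
  let ?Enc = "{q. q<K \<and> (q = e1 \<or> q = e2) \<noteq> (q \<in> X)}"
  let ?Back = "{q. q<Q \<and> (q\<in>Bs) \<noteq> (q\<in>Y)}"
  have cXc: "card ({..<K} - X) = K - card X" using XK by (simp add: card_Diff_subset fX)
  have cXK: "card X \<le> K" using card_mono[OF finite_lessThan XK] by simp
  have enc1: "card X \<le> card ?Enc + 2"
  proof -
    have "X \<subseteq> ?Enc \<union> {e1, e2}" using XK by auto
    then have "card X \<le> card (?Enc \<union> {e1, e2})" by (intro card_mono) auto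
    also have "\<dots> \<le> card ?Enc + card {e1, e2}" by (rule card_Un_le)
    also have "card {e1, e2} \<le> 2" by (simp add: card_insert_if)
    finally show ?thesis by simp
  qed
  have back1: "card Y + b \<le> card ?Back + 2 * card (Y \<inter> Bs)"
  proof -
    have sub: "(Y - Bs) \<union> (Bs - Y) \<subseteq> ?Back" using YQ BQ by auto
    have "card ((Y - Bs) \<union> (Bs - Y)) = card (Y - Bs) + card (Bs - Y)"
      by (rule card_Un_disjoint) (use fY fB in auto)
    moreover have "card ((Y - Bs) \<union> (Bs - Y)) \<le> card ?Back" using sub by (intro card_mono) auto
    moreover have "card (Y - Bs) + card (Y \<inter> Bs) = card Y"
    proof -
      have "card (Y - Bs) = card Y - card (Y \<inter> Bs)" using fY by (simp add: card_Diff_subset_Int)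
      moreover have "card (Y \<inter> Bs) \<le> card Y" using fY by (intro card_mono) auto
      ultimately show ?thesis by simp
    qed
    moreover have "card (Bs - Y) + card (Y \<inter> Bs) = b"
    proof -
      have "card (Bs - Y) = card Bs - card (Bs \<inter> Y)" using fB by (simp add: card_Diff_subset_Int)
      moreover have "card (Bs \<inter> Y) \<le> card Bs" using fB by (intro card_mono) auto
      moreover have "Bs \<inter> Y = Y \<inter> Bs" by blast
      ultimately show ?thesis using cB by simp
    qed
    ultimately show ?thesis by linarith
  qed
  show "Y \<subseteq> Bs"
  proof -
    have "card Y \<le> card (Y \<inter> Bs)" using T B enc1 back1 cXc cXK dk bk by linarith
    then have "Y \<inter> Bs = Y" using fY by (metis Int_lower1 card_seteq)
    then show ?thesis by blast
  qed
  assume Y0: "Y = {}"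
  have backB: "b \<le> card ?Back" using back1 Y0 by simp
  have encle: "card ?Enc + 2 \<le> k" using B backB dk bk by linarith
  have Xk: "k \<le> card X" using T Y0 cXc cXK dk by simp
  have in1: "e1 \<in> X"
  proof (rule ccontr)
    assume n1: "e1 \<notin> X"
    have "insert e1 (X - {e2}) \<subseteq> ?Enc" using n1 XK e by auto
    then have "card (insert e1 (X - {e2})) \<le> card ?Enc" by (intro card_mono) auto
    moreover have "card (insert e1 (X - {e2})) = Suc (card (X - {e2}))" using n1 fX by simp
    moreover have "card X \<le> Suc (card (X - {e2}))" using fX by (cases "e2 \<in> X") (simp_all add: card_Diff_singleton_if)
    ultimately show False using encle Xk by linarith
  qed
  have in2: "e2 \<in> X"
  proof (rule ccontr)
    assume n2: "e2 \<notin> X"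
    have "insert e2 (X - {e1}) \<subseteq> ?Enc" using n2 XK e by auto
    then have "card (insert e2 (X - {e1})) \<le> card ?Enc" by (intro card_mono) auto
    moreover have "card (insert e2 (X - {e1})) = Suc (card (X - {e1}))" using n2 fX by simp
    moreover have "card X \<le> Suc (card (X - {e1}))" using fX by (cases "e1 \<in> X") (simp_all add: card_Diff_singleton_if)
    ultimately show False using encle Xk by linarith
  qed
  show "e1 \<in> X \<and> e2 \<in> X \<and> card X \<le> k" using in1 in2 enc1 encle by simp
qed

lemma section_count:
  assumes ls: "length s = Lparam n k" and q: "1 \<le> q" "q \<le> k"
  shows "length (filter (\<lambda>x. x) (enc_section n k s q)) =
         card {x. x < n*k \<and> s!((3*n*k+1)*n*k + x) \<and> (q-1)*n \<le> x \<and> x < q*n}"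
proof -
  define F where "F = (3*n*k+1)*n*k"
  have qn: "(q-1)*n + n = q*n"
  proof -
    have "q = (q-1) + 1" using q by simp
    then have "q*n = ((q-1)+1)*n" by metis
    then show ?thesis by (simp add: algebra_simps)
  qed
  have qk: "q*n \<le> n*k" using q by (simp add: mult.commute)
  have len: "F + (q-1)*n + n \<le> length s" using ls qn qk unfolding Lparam_def F_def by linarith
  have "length (filter (\<lambda>x. x) (enc_section n k s q)) =
        card {u. u < n \<and> s!(F + (q-1)*n + u)}"
    unfolding enc_section_def F_def[symmetric] length_filter_conv_card
    using len by (intro arg_cong[where f=card] Collect_cong) (auto simp: add.assoc)
  also have "\<dots> = card ((\<lambda>u. (q-1)*n + u) ` {u. u < n \<and> s!(F + (q-1)*n + u)})"
    by (simp add: card_image)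
  also have "(\<lambda>u. (q-1)*n + u) ` {u. u < n \<and> s!(F + (q-1)*n + u)} =
             {x. x < n*k \<and> s!(F + x) \<and> (q-1)*n \<le> x \<and> x < q*n}"
  proof (rule set_eqI, rule iffI)
    fix x assume "x \<in> (\<lambda>u. (q-1)*n + u) ` {u. u < n \<and> s!(F + (q-1)*n + u)}"
    then obtain u where u: "u < n" "s!(F + (q-1)*n + u)" "x = (q-1)*n + u" by auto
    have "x < n*k" "x < q*n" using u qn qk by linarith+
    then show "x \<in> {x. x < n*k \<and> s!(F + x) \<and> (q-1)*n \<le> x \<and> x < q*n}"
      using u by (simp add: add.assoc)
  next
    fix x assume x: "x \<in> {x. x < n*k \<and> s!(F + x) \<and> (q-1)*n \<le> x \<and> x < q*n}"
    then have "x = (q-1)*n + (x - (q-1)*n)" "x - (q-1)*n < n" "s!(F + (q-1)*n + (x - (q-1)*n))"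
      using qn by auto
    then show "x \<in> (\<lambda>u. (q-1)*n + u) ` {u. u < n \<and> s!(F + (q-1)*n + u)}"
      by (intro image_eqI[where x="x - (q-1)*n"]) auto
  qed
  finally show ?thesis unfolding F_def .
qed

lemma sum_all_one:
  fixes f :: "nat \<Rightarrow> nat"
  assumes "finite A" "\<forall>q\<in>A. 1 \<le> f q" "sum f A = card A"
  shows "\<forall>q\<in>A. f q = 1"
proof -
  have "sum f A = sum (\<lambda>q. 1 + (f q - 1)) A" using assms(2) by (intro sum.cong) auto
  also have "\<dots> = sum (\<lambda>q. 1) A + sum (\<lambda>q. f q - 1) A" by (rule sum.distrib)
  finally have "sum f A = sum (\<lambda>q. 1) A + sum (\<lambda>q. f q - 1) A" .
  then have "sum (\<lambda>q. f q - 1) A = 0" using assms(3) by simp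
  then have "\<forall>q\<in>A. f q - 1 = 0" using assms(1) by simp
  then show ?thesis using assms(2) by force
qed

lemma card_partition:
  fixes X :: "nat set"
  assumes X: "X \<subseteq> {..<n*k}"
  shows "card X = (\<Sum>q\<in>{1..k}. card {x. x \<in> X \<and> (q-1)*n \<le> x \<and> x < q*n})"
proof -
  let ?S = "\<lambda>q. {x. x \<in> X \<and> (q-1)*n \<le> x \<and> x < q*n}"
  have fX: "finite X" using X finite_subset by blast
  have eq: "X = (\<Union>q\<in>{1..k}. ?S q)"
  proof
    show "X \<subseteq> (\<Union>q\<in>{1..k}. ?S q)"
    proof
      fix x assume x: "x \<in> X"
      then have xl: "x < n*k" using X by auto
      then have n0: "0 < n" by (cases n) auto
      have "x div n < k" using xl n0 by (simp add: div_less_iff_less_mult mult.commute)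
      moreover have "(x div n) * n \<le> x" by (simp add: div_times_less_eq_dividend)
      moreover have "x < (x div n + 1) * n"
      proof -
        have "x = x div n * n + x mod n" by simp
        moreover have "x mod n < n" using n0 by simp
        moreover have "(x div n + 1) * n = x div n * n + n" by simp
        ultimately show ?thesis by linarith
      qed
      ultimately show "x \<in> (\<Union>q\<in>{1..k}. ?S q)" using x
        by (intro UN_I[where a="x div n + 1"]) auto
    qed
  qed auto
  have disj: "\<forall>q1\<in>{1..k}. \<forall>q2\<in>{1..k}. q1 \<noteq> q2 \<longrightarrow> ?S q1 \<inter> ?S q2 = {}"
  proof (intro ballI impI)
    fix q1 q2 assume q: "q1 \<in> {1..k}" "q2 \<in> {1..k}" "q1 \<noteq> q2"
    show "?S q1 \<inter> ?S q2 = {}"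
    proof (rule ccontr)
      assume "?S q1 \<inter> ?S q2 \<noteq> {}"
      then obtain x where x: "(q1-1)*n \<le> x" "x < q1*n" "(q2-1)*n \<le> x" "x < q2*n" by auto
      consider "q1 < q2" | "q2 < q1" using q by linarith
      then show False
      proof cases
        case 1
        then have "q1 * n \<le> (q2-1)*n" by (intro mult_le_mono1) simp
        then show False using x by linarith
      next
        case 2
        then have "q2 * n \<le> (q1-1)*n" by (intro mult_le_mono1) simp
        then show False using x by linarith
      qed
    qed
  qed
  have "card X = card (\<Union>q\<in>{1..k}. ?S q)" using eq by simp
  also have "\<dots> = (\<Sum>q\<in>{1..k}. card (?S q))"
    by (rule card_UN_disjoint[OF finite_atLeastAtMost _ disj]) (use fX in auto)
  finally show ?thesis .
qed

theorem lemma5: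
  fixes n k :: nat and E :: "(nat \<times> nat) list" and s :: "bool list"
  assumes "simple_graph_edges n E"
    and "k \<ge> 3"
    and "length s = Lparam n k"
    and "close_substring (template n k) s (dparam n k)"
    and "\<forall>i j. 1 \<le> i \<and> i < j \<and> j \<le> k \<longrightarrow>
           close_substring (choice_string n E k i j) s (dparam n k)"
  shows "\<forall>q \<in> {1..k}. length (filter (\<lambda>x. x) (enc_section n k s q)) = 1"
proof -
  note E = assms(1) and k3 = assms(2) and ls = assms(3)
  define L where "L = Lparam n k"
  define d where "d = dparam n k"
  define F where "F = (3*n*k+1)*n*k"
  define K where "K = n*k"
  define b where "b = bparam n k"
  define N where "N = Npairs k"
  have Lpos: "0 < L" unfolding L_def Lparam_def using Npairs_ge3[OF k3] by (simp add: bparam_def)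
  have n2: "2 \<le> n"
  proof -
    have "close_substring (choice_string n E k 1 2) s (dparam n k)" using assms(5) k3 by simp
    then obtain p where "p + length s \<le> length (choice_string n E k 1 2)"
      unfolding close_substring_def by auto
    then have "E \<noteq> []" using ls Lpos unfolding L_def choice_string_def by auto
    then obtain e where e: "e \<in> set E" by (cases E) auto
    obtain r s' where rs: "e = (r, s')" by (cases e)
    show ?thesis using edge_bounds[OF E, of r s'] e rs by simp
  qed
  have tmpl: "card {x. x < Lparam n k \<and> template n k ! x \<noteq> s ! x} \<le> dparam n k"
  proof -
    obtain p where p: "p + length s \<le> length (template n k)"
      and h: "hamming (take (length s) (drop p (template n k))) s \<le> dparam n k"
      using assms(4) unfolding close_substring_def by auto
    have p0: "p = 0" using p ls template_props(1) by simp
    have "take (length s) (drop p (template n k)) = template n k" using p0 ls template_props(1) by simp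
    then have "hamming (template n k) s \<le> dparam n k" using h by simp
    then show ?thesis using hamming_card[of "template n k" s] ls template_props(1) by simp
  qed
  define X where "X = {q. q < K \<and> s!(F+q)}"
  define Y where "Y = {q. q < N*b \<and> s!(F+K+q)}"
  have XK: "X \<subseteq> {..<K}" unfolding X_def by auto
  have YQ: "Y \<subseteq> {..<N*b}" unfolding Y_def by auto
  have LFKN: "L = F + K + N*b" unfolding L_def F_def K_def N_def b_def Lparam_def by simp
  have T: "card ({..<K} - X) + card Y \<le> d"
  proof -
    have "card {q. q<K \<and> True \<noteq> s!(F+q)} + card {q. q<N*b \<and> False \<noteq> s!(F+K+q)}
         \<le> card {x. x<L \<and> template n k ! x \<noteq> s!x}"
    proof (rule split_count)
      show "\<forall>q<K. template n k ! (F+q) = True"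
      proof (intro allI impI)
        fix q assume q: "q < K"
        then have "F + q < Lparam n k" using LFKN L_def by simp
        then show "template n k ! (F+q) = True" using template_props(2) q unfolding F_def K_def by simp
      qed
      show "\<forall>q<N*b. template n k ! (F+K+q) = False"
      proof (intro allI impI)
        fix q assume q: "q < N*b"
        then have "F + K + q < Lparam n k" using LFKN L_def by simp
        then show "template n k ! (F+K+q) = False" using template_props(2) q unfolding F_def K_def by simp
      qed
    qed (use LFKN in simp)
    moreover have "{q. q<K \<and> True \<noteq> s!(F+q)} = {..<K} - X" unfolding X_def by auto
    moreover have "{q. q<N*b \<and> False \<noteq> s!(F+K+q)} = Y" unfolding Y_def by auto
    ultimately show ?thesis using tmpl unfolding L_def d_def by simp
  qed
  have dk: "d + k = K" unfolding d_def K_def dparam_def using n2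
    by (simp add: mult_le_mono1[of 1 n k, simplified])
  have bk: "b + 2*k = K + 2"
  proof -
    have "2*k \<le> n*k" using n2 by (intro mult_le_mono1)
    then show ?thesis unfolding b_def K_def bparam_def by simp
  qed
  have pairinfo: "\<exists>r s'. 1 \<le> r \<and> r \<le> n \<and> 1 \<le> s' \<and> s' \<le> n \<and>
      Y \<subseteq> {(pair_pos k i j - 1)*b ..< pair_pos k i j * b} \<and>
      (Y = {} \<longrightarrow> (i-1)*n + (r-1) \<in> X \<and> (j-1)*n + (s'-1) \<in> X \<and> card X \<le> k)"
    if ij: "1 \<le> i" "i < j" "j \<le> k" for i j
  proof -
    have cs: "close_substring (choice_string n E k i j) s (dparam n k)" using assms(5) ij by simp
    obtain r s' where mem: "(r, s') \<in> set E"
      and hb: "card {x. x < Lparam n k \<and> block n k i j (r, s') ! x \<noteq> s ! x} \<le> dparam n k"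
      using aligned[OF E k3 n2 ls tmpl ij cs] by blast
    have rs: "1 \<le> r" "r < s'" "s' \<le> n" using edge_bounds[OF E mem] by auto
    define ip where "ip = pair_pos k i j"
    have ipb: "1 \<le> ip" "ip \<le> N" using pair_pos_bounds[OF ij] unfolding ip_def N_def by auto
    define Bs where "Bs = {(ip-1)*b ..< ip*b}"
    define e1 where "e1 = (i-1)*n + (r-1)"
    define e2 where "e2 = (j-1)*n + (s'-1)"
    have ipb2: "ip * b = (ip - 1) * b + b"
    proof -
      have "ip = (ip - 1) + 1" using ipb by simp
      then have "ip * b = ((ip - 1) + 1) * b" by metis
      then show ?thesis by (simp add: algebra_simps)
    qed
    have BQ: "Bs \<subseteq> {..<N*b}"
    proof -
      have le: "ip * b \<le> N * b" using ipb by (intro mult_le_mono1)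
      show ?thesis
      proof
        fix x assume "x \<in> Bs"
        then have "x < ip * b" unfolding Bs_def by simp
        then have "x < N * b" using le by linarith
        then show "x \<in> {..<N*b}" by simp
      qed
    qed
    have cB: "card Bs = b" unfolding Bs_def using ipb2 by simp
    have e1K: "e1 < K"
    proof -
      have "(i-1)*n + n \<le> k*n"
      proof -
        have "(i-1)*n + n = i*n" using ij by (metis Suc_diff_1 less_le_trans mult_Suc zero_less_one add.commute le_less)
        moreover have "i*n \<le> k*n" using ij by (intro mult_le_mono1) simp
        ultimately show ?thesis by simp
      qed
      then show ?thesis unfolding e1_def K_def using rs by (simp add: mult.commute)
    qed
    have e2K: "e2 < K"
    proof -
      have "(j-1)*n + n \<le> k*n"
      proof -
        have "(j-1)*n + n = j*n" using ij by (metis Suc_diff_1 less_le_trans mult_Suc zero_less_one add.commute le_less)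
        moreover have "j*n \<le> k*n" using ij by (intro mult_le_mono1) simp
        ultimately show ?thesis by simp
      qed
      then show ?thesis unfolding e2_def K_def using rs by (simp add: mult.commute)
    qed
    have B: "card {q. q<K \<and> (q = e1 \<or> q = e2) \<noteq> (q \<in> X)} + card {q. q<N*b \<and> (q\<in>Bs) \<noteq> (q\<in>Y)} \<le> d"
    proof -
      have "card {q. q<K \<and> (q = e1 \<or> q = e2) \<noteq> s!(F+q)} + card {q. q<N*b \<and> (q\<in>Bs) \<noteq> s!(F+K+q)}
           \<le> card {x. x<L \<and> block n k i j (r, s') ! x \<noteq> s!x}"
      proof (rule split_count)
        show "\<forall>q<K. block n k i j (r, s') ! (F+q) = (q = e1 \<or> q = e2)"
        proof (intro allI impI)
          fix q assume q: "q < K"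
          then have "F + q < Lparam n k" using LFKN L_def by simp
          then show "block n k i j (r, s') ! (F+q) = (q = e1 \<or> q = e2)"
            using block_props(2)[of i j k r n s' "F+q"] ij rs q unfolding F_def K_def e1_def e2_def by simp
        qed
        show "\<forall>q<N*b. block n k i j (r, s') ! (F+K+q) = (q \<in> Bs)"
        proof (intro allI impI)
          fix q assume q: "q < N*b"
          then have "F + K + q < Lparam n k" using LFKN L_def by simp
          then show "block n k i j (r, s') ! (F+K+q) = (q \<in> Bs)"
            using block_props(2)[of i j k r n s' "F+K+q"] ij rs q
            unfolding F_def K_def Bs_def ip_def b_def by simp
        qed
      qed (use LFKN in simp)
      moreover have "{q. q<K \<and> (q = e1 \<or> q = e2) \<noteq> s!(F+q)} = {q. q<K \<and> (q = e1 \<or> q = e2) \<noteq> (q \<in> X)}"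
        unfolding X_def by auto
      moreover have "{q. q<N*b \<and> (q\<in>Bs) \<noteq> s!(F+K+q)} = {q. q<N*b \<and> (q\<in>Bs) \<noteq> (q\<in>Y)}"
        unfolding Y_def by auto
      ultimately show ?thesis using hb unfolding L_def d_def by simp
    qed
    note cr = core[OF XK YQ BQ cB e1K e2K dk bk T B]
    have "1 \<le> r \<and> r \<le> n \<and> 1 \<le> s' \<and> s' \<le> n \<and> Y \<subseteq> {(ip-1)*b..<ip*b} \<and>
      (Y = {} \<longrightarrow> e1 \<in> X \<and> e2 \<in> X \<and> card X \<le> k)" using cr rs unfolding Bs_def by auto
    then show ?thesis unfolding e1_def e2_def ip_def by blast
  qed
  have Y0: "Y = {}"
  proof -
    obtain r s' where "Y \<subseteq> {(pair_pos k 1 2 - 1)*b ..< pair_pos k 1 2 * b}"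
      using pairinfo[of 1 2] k3 by auto
    then have Y1: "Y \<subseteq> {0..<b}" using pair_pos_12[OF k3] by simp
    obtain r s' where "Y \<subseteq> {(pair_pos k 1 3 - 1)*b ..< pair_pos k 1 3 * b}"
      using pairinfo[of 1 3] k3 by auto
    then have Y2: "Y \<subseteq> {b..<2*b}" using pair_pos_13[OF k3] by simp
    show ?thesis
    proof (rule ccontr)
      assume "Y \<noteq> {}"
      then obtain y where y: "y \<in> Y" by auto
      then have "y < b" "b \<le> y" using Y1 Y2 by auto
      then show False by simp
    qed
  qed
  have cXk: "card X \<le> k" using pairinfo[of 1 2] k3 Y0 by auto
  have kX: "k \<le> card X"
  proof -
    have fX: "finite X" using XK finite_subset by blast
    have "card ({..<K} - X) = K - card X" using XK fX by (simp add: card_Diff_subset)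
    moreover have "card X \<le> K" using card_mono[OF finite_lessThan XK] by simp
    ultimately show ?thesis using T Y0 dk by simp
  qed
  define sec where "sec q = card {x. x \<in> X \<and> (q-1)*n \<le> x \<and> x < q*n}" for q
  have sec_ge: "\<forall>q\<in>{1..k}. 1 \<le> sec q"
  proof
    fix q assume q: "q \<in> {1..k}"
    have "\<exists>x. x \<in> X \<and> (q-1)*n \<le> x \<and> x < q*n"
    proof (cases "q < k")
      case True
      obtain r s' where rs: "1 \<le> r" "r \<le> n" and inX: "(q-1)*n + (r-1) \<in> X"
        using pairinfo[of q k] q True Y0 by auto
      have "(q-1)*n + n = q*n" using q by (metis Suc_diff_1 atLeastAtMost_iff less_le_trans mult_Suc zero_less_one add.commute le_less)
      then show ?thesis using inX rs by (intro exI[where x="(q-1)*n + (r-1)"]) auto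
    next
      case False
      then have qk: "q = k" using q by simp
      obtain r s' where rs: "1 \<le> s'" "s' \<le> n" and inX: "(k-1)*n + (s'-1) \<in> X"
        using pairinfo[of 1 k] k3 Y0 by auto
      have "(k-1)*n + n = k*n" using k3 by (metis Suc_diff_1 less_le_trans mult_Suc zero_less_numeral add.commute le_less)
      then show ?thesis using inX rs qk by (intro exI[where x="(k-1)*n + (s'-1)"]) auto
    qed
    then obtain x where "x \<in> {x. x \<in> X \<and> (q-1)*n \<le> x \<and> x < q*n}" by auto
    moreover have "finite {x. x \<in> X \<and> (q-1)*n \<le> x \<and> x < q*n}" by simp
    ultimately have "0 < card {x. x \<in> X \<and> (q-1)*n \<le> x \<and> x < q*n}" using card_gt_0_iff by blast
    then show "1 \<le> sec q" unfolding sec_def by simp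
  qed
  have "card X = (\<Sum>q\<in>{1..k}. sec q)" unfolding sec_def using card_partition[of X n k] XK K_def by simp
  then have "sum sec {1..k} = card {1..k}" using cXk kX by simp
  then have one: "\<forall>q\<in>{1..k}. sec q = 1" using sum_all_one[OF finite_atLeastAtMost sec_ge] by simp
  show ?thesis
  proof
    fix q assume q: "q \<in> {1..k}"
    have "length (filter (\<lambda>x. x) (enc_section n k s q)) =
         card {x. x < n*k \<and> s!((3*n*k+1)*n*k + x) \<and> (q-1)*n \<le> x \<and> x < q*n}"
      using section_count[OF ls] q by simp
    also have "{x. x < n*k \<and> s!((3*n*k+1)*n*k + x) \<and> (q-1)*n \<le> x \<and> x < q*n} =
               {x. x \<in> X \<and> (q-1)*n \<le> x \<and> x < q*n}" unfolding X_def K_def F_def by auto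
    finally show "length (filter (\<lambda>x. x) (enc_section n k s q)) = 1" using one q unfolding sec_def by simp
  qed
qed

end
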